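(* Let $n\ge1$, let $L_1,\dots,L_N$ be complex $n\times n$ matrices, let $\pi_1,\dots,\pi_n$ be mutually orthogonal rank-one orthogonal projectors on $\mathbb{C}^n$, let $w_{jk}:=\sum_{\alpha=1}^N \mathrm{Tr}(\pi_j L_\alpha\pi_k L_\alpha^\dagger)$ for $j\neq k$, and let $\Omega$ be the matrix with $\Omega_{jk}=w_{jk}$ ($j\ne k$) and $\Omega_{kk}=-\sum_{l\ne k}w_{lk}$. Let $N_1,\dots,N_{n_B}$ be the vertex sets of the basins of $G_\Omega$ and $N_B=\bigcup_\eta N_\eta$. Then the kernel of $\Omega^T$ is spanned by the linearly independent vectors $$\kappa_\eta := \Big(\sum_{\tau\in T_B(G_\Omega)} W(\tau)\Big)\sum_{j\in N_\eta} e_j + \sum_{l\notin N_B}\ \sum_{\tau\in T_B(G_\Omega,\eta,l)} W(\tau)\, e_l,\qquad \eta=1,\dots,n_B.$$ Moreover, if $\Omega$ is time-independent and $\Lambda(t)\in\mathbb{R}^n$ solves $\frac{d}{dt}\Lambda=\Omega\Lambda$, then each quantity $\kappa_\eta^T\Lambda(t)$ is constant in $t$.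
   Context: $G_\Omega$ is the directed graph on $\{1,\dots,n\}$ with a directed edge from $k$ to $j$ of weight $w_{jk}$ for each $j\ne k$ with $w_{jk}\ne0$. A basin is a strongly connected component with no edge leaving it. $e_j$ is the $j$-th standard basis vector. $T_B(G_\Omega)$ is the set of spanning forests of $G_\Omega$ whose set of roots is exactly $N_B$: subgraphs containing all $n$ vertices, with no directed cycles, in which every vertex of $N_B$ has no outgoing edge and every vertex outside $N_B$ has exactly one outgoing edge (so each vertex has a directed path to a unique root in $N_B$). $T_B(G_\Omega,\eta,l)$ is the set of forests in $T_B(G_\Omega)$ in which vertex $l$ lies in a tree whose root is in $N_\eta$. For a forest $\tau$, $W(\tau)$ is the product of its edge weights, with $W(\tau)=1$ if $\tau$ has no edges. *)

theory Defs
  imports "HOL-Analysis.Analysis"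
begin

text \<open>Vertices of the graph are the elements of a finite type 'n (so n = CARD('n) \<ge> 1).\<close>

definition ctrans :: "complex^'n^'m \<Rightarrow> complex^'m^'n" where
  "ctrans A = (\<chi> i j. cnj (A $ j $ i))"

definition rank_one_orth_proj :: "complex^'n^'n \<Rightarrow> bool" where
  "rank_one_orth_proj P \<longleftrightarrow> P ** P = P \<and> ctrans P = P \<and>
     (\<exists>u. u \<noteq> 0 \<and> range (\<lambda>x. P *v x) = {c *s u | c. True})"

text \<open>The rate w_jk = sum_alpha Tr(pi_j L_alpha pi_k L_alpha^dagger) (real part; it is real).\<close>
definition rate :: "nat \<Rightarrow> (nat \<Rightarrow> complex^'n^'n) \<Rightarrow> ('n \<Rightarrow> complex^'n^'n) \<Rightarrow> 'n \<Rightarrow> 'n \<Rightarrow> real" where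
  "rate N L \<pi> j k = Re (\<Sum>\<alpha>\<in>{1..N}. trace (\<pi> j ** L \<alpha> ** \<pi> k ** ctrans (L \<alpha>)))"

definition Omega_mat :: "nat \<Rightarrow> (nat \<Rightarrow> complex^'n^'n) \<Rightarrow> ('n \<Rightarrow> complex^'n^'n) \<Rightarrow> real^'n^'n" where
  "Omega_mat N L \<pi> = (\<chi> j k. if j \<noteq> k then rate N L \<pi> j k
                               else - (\<Sum>l\<in>UNIV - {k}. rate N L \<pi> l k))"

definition gedge :: "real^'n^'n \<Rightarrow> 'n \<Rightarrow> 'n \<Rightarrow> bool" where
  "gedge \<Omega> k j \<longleftrightarrow> j \<noteq> k \<and> \<Omega> $ j $ k \<noteq> 0"

definition gedges :: "real^'n^'n \<Rightarrow> ('n \<times> 'n) set" where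
  "gedges \<Omega> = {(k, j). gedge \<Omega> k j}"

definition scc :: "real^'n^'n \<Rightarrow> 'n \<Rightarrow> 'n set" where
  "scc \<Omega> k = {j. (k, j) \<in> (gedges \<Omega>)\<^sup>* \<and> (j, k) \<in> (gedges \<Omega>)\<^sup>*}"

definition basins :: "real^'n^'n \<Rightarrow> 'n set set" where
  "basins \<Omega> = {C. \<exists>k. C = scc \<Omega> k \<and> (\<forall>a\<in>C. \<forall>b. gedge \<Omega> a b \<longrightarrow> b \<in> C)}"

definition basin_union :: "real^'n^'n \<Rightarrow> 'n set" where
  "basin_union \<Omega> = \<Union> (basins \<Omega>)"

text \<open>Spanning forests (as sets of directed edges (source, target)) whose root set is exactly R.\<close>
definition spanning_forest :: "real^'n^'n \<Rightarrow> 'n set \<Rightarrow> ('n \<times> 'n) set \<Rightarrow> bool" where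
  "spanning_forest \<Omega> R F \<longleftrightarrow>
     F \<subseteq> gedges \<Omega> \<and>
     (\<forall>r\<in>R. \<forall>j. (r, j) \<notin> F) \<and>
     (\<forall>k. k \<notin> R \<longrightarrow> (\<exists>!j. (k, j) \<in> F)) \<and>
     acyclic F"

definition forests_B :: "real^'n^'n \<Rightarrow> ('n \<times> 'n) set set" where
  "forests_B \<Omega> = {F. spanning_forest \<Omega> (basin_union \<Omega>) F}"

definition forests_B_to :: "real^'n^'n \<Rightarrow> 'n set \<Rightarrow> 'n \<Rightarrow> ('n \<times> 'n) set set" where
  "forests_B_to \<Omega> C l = {F \<in> forests_B \<Omega>. \<exists>r\<in>C. (l, r) \<in> F\<^sup>*}"

definition fweight :: "real^'n^'n \<Rightarrow> ('n \<times> 'n) set \<Rightarrow> real" where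
  "fweight \<Omega> F = (\<Prod>(k, j)\<in>F. \<Omega> $ j $ k)"

definition kappa :: "real^'n^'n \<Rightarrow> 'n set \<Rightarrow> real^'n" where
  "kappa \<Omega> C =
     (\<Sum>\<tau>\<in>forests_B \<Omega>. fweight \<Omega> \<tau>) *\<^sub>R (\<Sum>j\<in>C. axis j 1)
     + (\<Sum>l\<in>UNIV - basin_union \<Omega>. (\<Sum>\<tau>\<in>forests_B_to \<Omega> C l. fweight \<Omega> \<tau>) *\<^sub>R axis l 1)"

end

theory Submission
  imports Defs
begin

definition reachC :: "('n \<times> 'n) set \<Rightarrow> 'n \<Rightarrow> 'n set \<Rightarrow> bool" where
  "reachC F v C \<longleftrightarrow> (\<exists>r\<in>C. (v,r) \<in> F\<^sup>*)"

definition succ :: "('n \<times> 'n) set \<Rightarrow> 'n \<Rightarrow> 'n" where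
  "succ F k = (THE j. (k,j) \<in> F)"

definition swp :: "('n \<times> 'n) set \<Rightarrow> 'n \<Rightarrow> 'n \<Rightarrow> ('n \<times> 'n) set" where
  "swp F k j = insert (k,j) (F - {(k, succ F k)})"

locale mk =
  fixes Om :: "real^'n^'n"
  assumes nonneg: "\<And>j k. j \<noteq> k \<Longrightarrow> Om $ j $ k \<ge> 0"
  and colsum: "\<And>k. (\<Sum>j\<in>UNIV. Om $ j $ k) = 0"
begin

abbreviation "E \<equiv> gedges Om"
abbreviation "B \<equiv> basin_union Om"
abbreviation "T \<equiv> forests_B Om"

lemma edge_iff: "(a,b) \<in> E \<longleftrightarrow> b \<noteq> a \<and> Om $ b $ a \<noteq> 0"
  by (simp add: gedges_def gedge_def)

lemma scc_mem: "v \<in> scc Om m \<Longrightarrow> scc Om v = scc Om m"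
  unfolding scc_def by (auto intro: rtrancl_trans)

lemma basin_closed: "C \<in> basins Om \<Longrightarrow> a \<in> C \<Longrightarrow> (a,b) \<in> E\<^sup>* \<Longrightarrow> b \<in> C"
proof -
  assume C: "C \<in> basins Om" and a: "a \<in> C" and ab: "(a,b) \<in> E\<^sup>*"
  from ab show "b \<in> C"
  proof (induction rule: rtrancl_induct)
    case base then show ?case using a .
  next
    case (step y z) then show ?case using C unfolding basins_def gedges_def by auto
  qed
qed

lemma basin_scc: "C \<in> basins Om \<Longrightarrow> v \<in> C \<Longrightarrow> C = scc Om v"
proof -
  assume "C \<in> basins Om" "v \<in> C"
  then obtain m where "C = scc Om m" unfolding basins_def by blast
  then show ?thesis using scc_mem \<open>v \<in> C\<close> by simp
qed

lemma basin_disj: "C \<in> basins Om \<Longrightarrow> C' \<in> basins Om \<Longrightarrow> v \<in> C \<Longrightarrow> v \<in> C' \<Longrightarrow> C = C'"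
  by (metis basin_scc)

lemma scc_self: "v \<in> scc Om v" by (simp add: scc_def)

lemma basin_ne: "C \<in> basins Om \<Longrightarrow> C \<noteq> {}"
  unfolding basins_def using scc_self by blast

lemma basin_sub: "C \<in> basins Om \<Longrightarrow> C \<subseteq> B"
  unfolding basin_union_def by blast

lemma reach_basin: "\<exists>b\<in>B. (k,b) \<in> E\<^sup>*"
proof -
  define R where "R v = {j. (v,j) \<in> E\<^sup>*}" for v
  have "\<exists>m. (k,m) \<in> E\<^sup>* \<and> (\<forall>y. (k,y) \<in> E\<^sup>* \<longrightarrow> card (R m) \<le> card (R y))"
    by (rule ex_has_least_nat[of "\<lambda>m. (k,m) \<in> E\<^sup>*" k "\<lambda>m. card (R m)"]) simp
  then obtain m where km: "(k,m) \<in> E\<^sup>*" and mn: "\<And>y. (k,y) \<in> E\<^sup>* \<Longrightarrow> card (R m) \<le> card (R y)"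
    by blast
  have bck: "(y,m) \<in> E\<^sup>*" if "(m,y) \<in> E\<^sup>*" for y
  proof -
    have sub: "R y \<subseteq> R m" using that unfolding R_def by (auto intro: rtrancl_trans)
    have "card (R m) \<le> card (R y)" using mn km that by (meson rtrancl_trans)
    moreover have "card (R y) \<le> card (R m)" using sub by (intro card_mono) simp_all
    ultimately have "R y = R m" using sub by (intro card_subset_eq) auto
    then show ?thesis unfolding R_def by auto
  qed
  have "scc Om m \<in> basins Om"
    unfolding basins_def
  proof (intro CollectI exI conjI ballI allI impI)
    fix a b assume a: "a \<in> scc Om m" and ab: "gedge Om a b"
    then have "(m,b) \<in> E\<^sup>*" unfolding scc_def gedges_def
      by (auto intro: rtrancl_into_rtrancl)
    then show "b \<in> scc Om m" using bck unfolding scc_def by auto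
  qed simp
  then have "m \<in> B" unfolding basin_union_def using scc_self by blast
  then show ?thesis using km by blast
qed

lemma T_finite: "finite T" by (rule finite)

lemma forestD:
  assumes "F \<in> T"
  shows "F \<subseteq> E" "\<And>r j. r \<in> B \<Longrightarrow> (r,j) \<notin> F" "\<And>v. v \<notin> B \<Longrightarrow> \<exists>!x. (v,x) \<in> F" "acyclic F"
  using assms unfolding forests_B_def spanning_forest_def by auto

lemma W_pos: assumes "F \<in> T" shows "fweight Om F > 0"
proof -
  have "0 < Om $ j $ k" if "(k,j) \<in> F" for k j
    using forestD(1)[OF assms] that nonneg[of j k] by (auto simp: edge_iff)
  then show ?thesis unfolding fweight_def by (intro prod_pos) auto
qed

lemma T_ne: "T \<noteq> {}"
proof -
  define d where "d v = (LEAST n. \<exists>b\<in>B. (v,b) \<in> E ^^ n)" for v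
  have dex: "\<exists>b\<in>B. (v,b) \<in> E ^^ d v" for v
  proof -
    obtain b where b: "b \<in> B" "(v,b) \<in> E\<^sup>*" using reach_basin by blast
    then obtain n where "(v,b) \<in> E ^^ n" using rtrancl_power by blast
    then have "\<exists>n. \<exists>b\<in>B. (v,b) \<in> E ^^ n" using b by blast
    from LeastI_ex[OF this] show ?thesis unfolding d_def .
  qed
  have step: "\<exists>y. (v,y) \<in> E \<and> d y < d v" if "v \<notin> B" for v
  proof -
    obtain b where b: "b \<in> B" "(v,b) \<in> E ^^ d v" using dex by blast
    have "d v \<noteq> 0"
    proof
      assume "d v = 0"
      with b have "v = b" by simp
      with b that show False by simp
    qed
    then obtain m where m: "d v = Suc m" using not0_implies_Suc by blast
    then obtain y where y: "(v,y) \<in> E" "(y,b) \<in> E ^^ m" using b relpow_Suc_D2 by metis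
    have "d y \<le> m" unfolding d_def using y(2) b(1) by (intro Least_le) blast
    then show ?thesis using y m by auto
  qed
  define nx where "nx v = (SOME y. (v,y) \<in> E \<and> d y < d v)" for v
  have nx: "(v, nx v) \<in> E \<and> d (nx v) < d v" if "v \<notin> B" for v
    unfolding nx_def using step[OF that] by (rule someI_ex)
  define F where "F = {(v, nx v) | v. v \<notin> B}"
  have dec: "d y < d x" if "(x,y) \<in> F\<^sup>+" for x y
    using that
  proof (induction rule: trancl_induct)
    case (base y) then show ?case using nx unfolding F_def by auto
  next
    case (step y z) then show ?case using nx unfolding F_def by fastforce
  qed
  have "F \<in> T"
    unfolding forests_B_def spanning_forest_def
  proof (intro CollectI conjI)
    show "F \<subseteq> E" using nx unfolding F_def by auto
    show "\<forall>r\<in>B. \<forall>j. (r, j) \<notin> F" unfolding F_def by auto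
    show "\<forall>k. k \<notin> B \<longrightarrow> (\<exists>!j. (k, j) \<in> F)" unfolding F_def by auto
    show "acyclic F" unfolding acyclic_def using dec by blast
  qed
  then show ?thesis by blast
qed

lemma Z_pos: "0 < (\<Sum>F\<in>T. fweight Om F)"
  using T_ne W_pos T_finite by (intro sum_pos) auto

lemma forest_sv: "F \<in> T \<Longrightarrow> single_valued F"
  unfolding single_valued_def using forestD(2,3) by metis

lemma root_reach: "F \<in> T \<Longrightarrow> r \<in> B \<Longrightarrow> (r,y) \<in> F\<^sup>* \<Longrightarrow> y = r"
  by (erule converse_rtranclE) (auto dest: forestD(2))

lemma reach_B: "F \<in> T \<Longrightarrow> v \<in> B \<Longrightarrow> C \<in> basins Om \<Longrightarrow> reachC F v C \<longleftrightarrow> v \<in> C"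
  unfolding reachC_def using root_reach by blast

lemma bad_reach:
  assumes F: "F \<in> T" and jk: "(j,k) \<in> F\<^sup>*" and C: "C \<in> basins Om"
  shows "reachC F j C \<longleftrightarrow> reachC F k C"
proof
  assume "reachC F k C" then show "reachC F j C" using jk unfolding reachC_def
    by (meson rtrancl_trans)
next
  assume "reachC F j C"
  then obtain r where r: "r \<in> C" "(j,r) \<in> F\<^sup>*" unfolding reachC_def by blast
  have rB: "r \<in> B" using basin_sub[OF C] r by auto
  from single_valued_confluent[OF forest_sv[OF F] jk r(2)]
  have "(k,r) \<in> F\<^sup>*" using root_reach[OF F rB] by auto
  then show "reachC F k C" using r unfolding reachC_def by blast
qed

lemma swap_props:
  assumes F: "F \<in> T" and kB: "k \<notin> B" and jk: "j \<noteq> k" "Om$j$k \<noteq> 0" and good: "(j,k) \<notin> F\<^sup>*"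
  defines "s \<equiv> succ F k" and "F' \<equiv> swp F k j"
  shows "F' \<in> T" "succ F' k = j" "swp F' k s = F" "(s,k) \<notin> F'\<^sup>*" "s \<noteq> k" "Om$s$k \<noteq> 0"
    "Om$s$k * fweight Om F' = Om$j$k * fweight Om F"
    "C \<in> basins Om \<Longrightarrow> reachC F' s C \<longleftrightarrow> reachC F k C"
proof -
  have sub: "F \<subseteq> E" and roots: "\<And>r j. r \<in> B \<Longrightarrow> (r,j) \<notin> F"
    and uni: "\<And>v. v \<notin> B \<Longrightarrow> \<exists>!x. (v,x) \<in> F" and acy: "acyclic F"
    using forestD[OF F] by auto
  have ks: "(k,s) \<in> F" unfolding s_def succ_def using uni[OF kB] by (rule theI')
  have kx: "x = s" if "(k,x) \<in> F" for x using ks uni[OF kB] that by blast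
  have s_edge: "(k,s) \<in> E" using ks sub by auto
  then show sk0: "s \<noteq> k" "Om$s$k \<noteq> 0" by (auto simp: edge_iff)
  define F0 where "F0 = F - {(k,s)}"
  have F'eq: "F' = insert (k,j) F0" unfolding F'_def swp_def F0_def s_def by simp
  have F0sub: "F0 \<subseteq> F" unfolding F0_def by auto
  have F0rt: "F0\<^sup>* \<subseteq> F\<^sup>*" using rtrancl_mono[OF F0sub] .
  have F0k: "y = k" if "(k,y) \<in> F0\<^sup>*" for y
    using that by (rule converse_rtranclE) (use kx F0_def in auto)
  have sk: "(s,k) \<notin> F\<^sup>*"
  proof
    assume "(s,k) \<in> F\<^sup>*"
    then have "(k,k) \<in> F\<^sup>+" using ks by (meson rtrancl_into_trancl2)
    then show False using acy unfolding acyclic_def by blast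
  qed
  have avoid0: "(v,y) \<in> F0\<^sup>*" if "(v,y) \<in> F\<^sup>*" "(v,k) \<notin> F\<^sup>*" for v y
    using that(1)
  proof (induction rule: rtrancl_induct)
    case base then show ?case by simp
  next
    case (step y z)
    have "y \<noteq> k" using step.hyps(1) that(2) by auto
    then have "(y,z) \<in> F0" using step.hyps(2) unfolding F0_def by auto
    then show ?case by (rule rtrancl_into_rtrancl[OF step.IH])
  qed
  have F'rt: "F'\<^sup>* = F0\<^sup>* \<union> {(x,y). (x,k) \<in> F0\<^sup>* \<and> (j,y) \<in> F0\<^sup>*}"
    by (simp add: F'eq rtrancl_insert)
  show "(s,k) \<notin> F'\<^sup>*" using F'rt F0rt sk by auto
  have jF0: "(k,j) \<in> F0 \<Longrightarrow> False" using kx unfolding F0_def by auto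
  show "F' \<in> T"
    unfolding forests_B_def spanning_forest_def
  proof (intro CollectI conjI)
    show "F' \<subseteq> E" using jk sub F0sub unfolding F'eq by (auto simp: edge_iff)
    show "\<forall>r\<in>B. \<forall>x. (r, x) \<notin> F'" using roots F0sub kB unfolding F'eq by auto
    show "\<forall>v. v \<notin> B \<longrightarrow> (\<exists>!x. (v, x) \<in> F')"
    proof (intro allI impI)
      fix v assume v: "v \<notin> B"
      show "\<exists>!x. (v, x) \<in> F'"
      proof (cases "v = k")
        case True then show ?thesis using jF0 kx unfolding F'eq F0_def by auto
      next
        case False
        then have "(v,x) \<in> F' \<longleftrightarrow> (v,x) \<in> F" for x unfolding F'eq F0_def by auto
        then show ?thesis using uni[OF v] by simp
      qed
    qed
    show "acyclic F'"
      unfolding acyclic_def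
    proof
      fix x
      show "(x,x) \<notin> F'\<^sup>+"
      proof
        assume "(x,x) \<in> F'\<^sup>+"
        then have "(x,x) \<in> F0\<^sup>+ \<or> ((x,k) \<in> F0\<^sup>* \<and> (j,x) \<in> F0\<^sup>*)"
          unfolding F'eq trancl_insert by auto
        then show False
        proof
          assume "(x,x) \<in> F0\<^sup>+"
          then have "(x,x) \<in> F\<^sup>+" using trancl_mono F0sub by blast
          then show False using acy unfolding acyclic_def by blast
        next
          assume "(x,k) \<in> F0\<^sup>* \<and> (j,x) \<in> F0\<^sup>*"
          then have "(j,k) \<in> F\<^sup>*" using F0rt by (meson rtrancl_trans subsetD)
          then show False using good by simp
        qed
      qed
    qed
  qed
  have k'x: "(k,x) \<in> F' \<longleftrightarrow> x = j" for x using jF0 kx unfolding F'eq F0_def by auto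
  show sF': "succ F' k = j" unfolding succ_def using k'x by simp
  have "swp F' k s = insert (k,s) (F' - {(k,j)})" unfolding swp_def sF' ..
  then show "swp F' k s = F" unfolding F'eq using jF0 ks F0_def by auto
  show "Om$s$k * fweight Om F' = Om$j$k * fweight Om F"
  proof (cases "j = s")
    case True
    then have "F' = F" unfolding F'eq F0_def using ks by auto
    then show ?thesis using True by simp
  next
    case False
    have nj: "(k,j) \<notin> F0" using jF0 by blast
    have "fweight Om F' = Om$j$k * (\<Prod>(a,b)\<in>F0. Om$b$a)"
      unfolding fweight_def F'eq using nj by (simp add: prod.insert)
    moreover have "fweight Om F = Om$s$k * (\<Prod>(a,b)\<in>F0. Om$b$a)"
      unfolding fweight_def F0_def using prod.remove[OF finite ks, of "\<lambda>(a,b). Om$b$a"] by simp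
    ultimately show ?thesis by simp
  qed
  assume C: "C \<in> basins Om"
  have "(s,y) \<in> F'\<^sup>* \<longleftrightarrow> (s,y) \<in> F\<^sup>*" for y
  proof -
    have "(s,k) \<notin> F0\<^sup>*" using sk F0rt by auto
    then have "(s,y) \<in> F'\<^sup>* \<longleftrightarrow> (s,y) \<in> F0\<^sup>*" using F'rt by auto
    also have "\<dots> \<longleftrightarrow> (s,y) \<in> F\<^sup>*" using F0rt avoid0[of s y] sk by auto
    finally show ?thesis .
  qed
  then have "reachC F' s C \<longleftrightarrow> reachC F s C" unfolding reachC_def by simp
  also have "\<dots> \<longleftrightarrow> reachC F k C"
  proof
    assume "reachC F s C" then show "reachC F k C" unfolding reachC_def
      using ks by (meson converse_rtrancl_into_rtrancl)
  next
    assume "reachC F k C"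
    then obtain r where r: "r \<in> C" "(k,r) \<in> F\<^sup>*" unfolding reachC_def by blast
    have "r \<noteq> k" using r basin_sub[OF C] kB by auto
    then have "(s,r) \<in> F\<^sup>*" using r(2) kx by (metis converse_rtranclE)
    then show "reachC F s C" using r unfolding reachC_def by blast
  qed
  finally show "reachC F' s C \<longleftrightarrow> reachC F k C" .
qed

definition ind :: "('n \<times> 'n) set \<Rightarrow> 'n \<Rightarrow> 'n set \<Rightarrow> real" where
  "ind F v C = (if reachC F v C then 1 else 0)"

lemma kappa_comp:
  assumes C: "C \<in> basins Om"
  shows "kappa Om C $ v = (\<Sum>F\<in>T. fweight Om F * ind F v C)"
proof -
  have c1: "(\<Sum>j\<in>C. axis j (1::real)) $ v = (if v \<in> C then 1 else 0)"
    by (simp add: axis_def)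
  have c2: "(\<Sum>l\<in>UNIV - B. c l *\<^sub>R axis l (1::real)) $ v = (if v \<notin> B then c v else 0)" for c
  proof -
    have "(\<Sum>l\<in>UNIV - B. c l *\<^sub>R axis l (1::real)) $ v = (\<Sum>l\<in>UNIV - B. if l = v then c l else 0)"
      unfolding sum_component by (intro sum.cong) (auto simp: axis_def)
    also have "\<dots> = (if v \<notin> B then c v else 0)" by (simp add: sum.delta)
    finally show ?thesis .
  qed
  show ?thesis
  proof (cases "v \<in> B")
    case True
    then have "ind F v C = (if v \<in> C then 1 else 0)" if "F \<in> T" for F
      using reach_B[OF that True C] unfolding ind_def by simp
    then show ?thesis unfolding kappa_def using True c1 c2 by (simp add: sum_distrib_left)
  next
    case False
    then have vC: "v \<notin> C" using basin_sub[OF C] by auto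
    have "forests_B_to Om C v = {F\<in>T. reachC F v C}"
      unfolding forests_B_to_def reachC_def by simp
    then have "(\<Sum>F\<in>forests_B_to Om C v. fweight Om F) = (\<Sum>F\<in>T. fweight Om F * ind F v C)"
      by (simp add: sum.inter_filter[OF T_finite] ind_def if_distrib cong: if_cong)
    then show ?thesis unfolding kappa_def using False vC c1 c2 by simp
  qed
qed

lemma tmv: "(transpose A *v x) $ k = (\<Sum>j\<in>UNIV. A$j$k * x$j)" for A :: "real^'n^'n"
  by (simp add: matrix_vector_mult_def transpose_def)

lemma diff_form:
  "(\<Sum>j\<in>UNIV. Om$j$k * g j) = (\<Sum>j\<in>{j. j\<noteq>k \<and> Om$j$k \<noteq> 0}. Om$j$k * (g j - g k))"
proof -
  have "(\<Sum>j\<in>UNIV. Om$j$k * g j) = (\<Sum>j\<in>UNIV. Om$j$k * g j) - (\<Sum>j\<in>UNIV. Om$j$k) * g k"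
    using colsum by simp
  also have "\<dots> = (\<Sum>j\<in>UNIV. Om$j$k * (g j - g k))"
    by (simp add: sum_distrib_right sum_distrib_left sum_subtractf algebra_simps)
  also have "\<dots> = (\<Sum>j\<in>{j. j\<noteq>k \<and> Om$j$k \<noteq> 0}. Om$j$k * (g j - g k))"
    by (rule sum.mono_neutral_right) auto
  finally show ?thesis .
qed

lemma kernel_core:
  assumes C: "C \<in> basins Om" and kB: "k \<notin> B"
  shows "(\<Sum>j\<in>{j. j\<noteq>k \<and> Om$j$k \<noteq> 0}. Om$j$k * ((\<Sum>F\<in>T. fweight Om F * ind F j C) - (\<Sum>F\<in>T. fweight Om F * ind F k C))) = 0"
proof -
  define J where "J = {j. j\<noteq>k \<and> Om$j$k \<noteq> 0}"
  define a where "a p = Om$(snd p)$k * fweight Om (fst p)" for p :: "('n \<times> 'n) set \<times> 'n"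
  define f where "f p = ind (fst p) (snd p) C" for p :: "('n \<times> 'n) set \<times> 'n"
  define g where "g p = ind (fst p) k C" for p :: "('n \<times> 'n) set \<times> 'n"
  define P where "P = {p :: ('n \<times> 'n) set \<times> 'n. (snd p, k) \<in> (fst p)\<^sup>*}"
  define G where "G = T \<times> J - P"
  define phi where "phi p = (swp (fst p) k (snd p), succ (fst p) k)" for p :: "('n \<times> 'n) set \<times> 'n"
  have "(\<Sum>j\<in>J. Om$j$k * ((\<Sum>F\<in>T. fweight Om F * ind F j C) - (\<Sum>F\<in>T. fweight Om F * ind F k C)))
      = (\<Sum>j\<in>J. \<Sum>F\<in>T. a (F,j) * (f (F,j) - g (F,j)))"
    unfolding a_def f_def g_def
    by (simp add: sum_distrib_left sum_subtractf[symmetric] algebra_simps)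
  also have "\<dots> = (\<Sum>F\<in>T. \<Sum>j\<in>J. a (F,j) * (f (F,j) - g (F,j)))"
    by (rule sum.swap)
  also have "\<dots> = (\<Sum>p\<in>T \<times> J. a p * (f p - g p))"
    by (simp add: sum.cartesian_product split_def)
  also have "\<dots> = (\<Sum>p\<in>T \<times> J \<inter> P. a p * (f p - g p)) + (\<Sum>p\<in>G. a p * (f p - g p))"
    unfolding G_def by (rule sum.Int_Diff) simp
  also have "(\<Sum>p\<in>T \<times> J \<inter> P. a p * (f p - g p)) = 0"
  proof (rule sum.neutral, rule ballI)
    fix p assume p: "p \<in> T \<times> J \<inter> P"
    then have "f p = g p" unfolding f_def g_def ind_def P_def
      using bad_reach[of "fst p" "snd p" k C] C by auto
    then show "a p * (f p - g p) = 0" by simp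
  qed
  also have "(\<Sum>p\<in>G. a p * (f p - g p)) = 0"
  proof -
    have props: "phi p \<in> G \<and> phi (phi p) = p \<and> a (phi p) * f (phi p) = a p * g p" if p: "p \<in> G" for p
    proof -
      obtain F j where pe: "p = (F,j)" by (cases p)
      have F: "F \<in> T" and j: "j \<noteq> k" "Om$j$k \<noteq> 0" and good: "(j,k) \<notin> F\<^sup>*"
        using p unfolding pe G_def J_def P_def by auto
      note sp = swap_props[OF F kB j good]
      have "phi p \<in> G" unfolding pe phi_def G_def J_def P_def using sp(1,4,5,6) by auto
      moreover have "phi (phi p) = p" unfolding pe phi_def using sp(2,3) by simp
      moreover have "a (phi p) * f (phi p) = a p * g p"
        unfolding pe phi_def a_def f_def g_def ind_def using sp(7) sp(8)[OF C]
        by (simp add: mult.commute)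
      ultimately show ?thesis by blast
    qed
    have bij: "bij_betw phi G G"
      by (rule bij_betwI[where g = phi]) (use props in auto)
    have "(\<Sum>p\<in>G. a p * g p) = (\<Sum>p\<in>G. a (phi p) * f (phi p))"
      using props by (intro sum.cong) auto
    also have "\<dots> = (\<Sum>p\<in>G. a p * f p)"
      by (rule sum.reindex_bij_betw[OF bij])
    finally show ?thesis by (simp add: right_diff_distrib sum_subtractf)
  qed
  finally show ?thesis unfolding J_def by simp
qed

lemma kappa_B:
  assumes C: "C \<in> basins Om" and v: "v \<in> B"
  shows "kappa Om C $ v = (if v \<in> C then (\<Sum>F\<in>T. fweight Om F) else 0)"
proof -
  have "ind F v C = (if v \<in> C then 1 else 0)" if "F \<in> T" for F
    using reach_B[OF that v C] unfolding ind_def by simp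
  then show ?thesis unfolding kappa_comp[OF C] by simp
qed

lemma kernel:
  assumes C: "C \<in> basins Om" shows "transpose Om *v kappa Om C = 0"
proof (rule vec_eq_iff[THEN iffD2], rule allI)
  fix k
  define g where "g v = (\<Sum>F\<in>T. fweight Om F * ind F v C)" for v
  define J where "J = {j. j\<noteq>k \<and> Om$j$k \<noteq> 0}"
  have "(transpose Om *v kappa Om C) $ k = (\<Sum>j\<in>UNIV. Om$j$k * g j)"
    unfolding tmv g_def kappa_comp[OF C] ..
  also have "\<dots> = (\<Sum>j\<in>J. Om$j$k * (g j - g k))" unfolding J_def by (rule diff_form)
  also have "\<dots> = 0"
  proof (cases "k \<in> B")
    case False then show ?thesis unfolding g_def J_def by (rule kernel_core[OF C])
  next
    case True
    then obtain C' where C': "C' \<in> basins Om" "k \<in> C'" unfolding basin_union_def by blast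
    have "g j = g k" if "j \<in> J" for j
    proof -
      have kj: "(k,j) \<in> E" using that by (simp add: edge_iff J_def)
      then have jC': "j \<in> C'" using basin_closed[OF C'(1) C'(2)] by blast
      have jB: "j \<in> B" using basin_sub[OF C'(1)] jC' by auto
      have "j \<in> C \<longleftrightarrow> k \<in> C"
      proof
        assume "k \<in> C" then show "j \<in> C" using basin_closed[OF C] kj by blast
      next
        assume jC: "j \<in> C"
        have "C' = scc Om k" by (rule basin_scc[OF C'])
        then have "(j,k) \<in> E\<^sup>*" using jC' unfolding scc_def by auto
        then show "k \<in> C" using basin_closed[OF C jC] by blast
      qed
      moreover have "ind F j C = (if j \<in> C then 1 else 0)" "ind F k C = (if k \<in> C then 1 else 0)"
        if "F \<in> T" for F
        using reach_B[OF that jB C] reach_B[OF that True C] unfolding ind_def by simp_all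
      ultimately show ?thesis unfolding g_def by simp
    qed
    then show ?thesis by simp
  qed
  finally show "(transpose Om *v kappa Om C) $ k = 0 $ k" by simp
qed

lemma MP:
  assumes x: "transpose Om *v x = 0" and le: "\<And>j. (k,j) \<in> E \<Longrightarrow> x$j \<le> x$k" and kj: "(k,j) \<in> E"
  shows "x$j = x$k"
proof -
  define J where "J = {j. j\<noteq>k \<and> Om$j$k \<noteq> 0}"
  have "(\<Sum>i\<in>J. Om$i$k * (x$i - x$k)) = 0"
    using diff_form[of k "\<lambda>j. x$j"] tmv[of Om x k] x unfolding J_def by simp
  then have "(\<Sum>i\<in>J. Om$i$k * (x$k - x$i)) = 0"
    by (simp add: right_diff_distrib sum_subtractf)
  moreover have "0 \<le> Om$i$k * (x$k - x$i)" if "i \<in> J" for i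
    using that le[of i] nonneg[of i k] unfolding J_def by (simp add: edge_iff)
  moreover have fJ: "finite J" by simp
  ultimately have "\<forall>i\<in>J. Om$i$k * (x$k - x$i) = 0"
    using sum_nonneg_eq_0_iff[OF fJ, of "\<lambda>i. Om$i$k * (x$k - x$i)"] by blast
  moreover have "j \<in> J" using kj unfolding J_def by (simp add: edge_iff)
  ultimately show ?thesis unfolding J_def by auto
qed

lemma max_closed:
  assumes x: "transpose Om *v x = 0" and le: "\<And>v. (k,v) \<in> E\<^sup>* \<Longrightarrow> x$v \<le> x$k"
    and kv: "(k,v) \<in> E\<^sup>*"
  shows "x$v = x$k"
  using kv
proof (induction rule: rtrancl_induct)
  case base then show ?case by simp
next
  case (step y z)
  have "x$z = x$y"
  proof (rule MP[OF x _ step.hyps(2)])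
    fix j assume "(y,j) \<in> E"
    then have "(k,j) \<in> E\<^sup>*" by (rule rtrancl_into_rtrancl[OF step.hyps(1)])
    then show "x$j \<le> x$y" using le step.IH by simp
  qed
  then show ?case using step.IH by simp
qed

lemma const_basin:
  assumes x: "transpose Om *v x = 0" and C: "C \<in> basins Om" and v: "v \<in> C" and w: "w \<in> C"
  shows "x$v = x$w"
proof -
  have fin: "finite ((\<lambda>v. x$v) ` C)" by simp
  have ne: "(\<lambda>v. x$v) ` C \<noteq> {}" using v by auto
  obtain k where k: "k \<in> C" "x$k = Max ((\<lambda>v. x$v) ` C)" using Max_in[OF fin ne] by auto
  have km: "x$u \<le> x$k" if "u \<in> C" for u using k(2) fin that by simp
  have sc: "C = scc Om k" by (rule basin_scc[OF C k(1)])
  have eq: "x$u = x$k" if "u \<in> C" for u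
  proof (rule max_closed[OF x])
    show "(k,u) \<in> E\<^sup>*" using that sc unfolding scc_def by auto
    fix u' assume "(k,u') \<in> E\<^sup>*"
    then show "x$u' \<le> x$k" using km basin_closed[OF C k(1)] by blast
  qed
  show ?thesis using eq[OF v] eq[OF w] by simp
qed

lemma le_zero:
  assumes x: "transpose Om *v x = 0" and zB: "\<And>v. v \<in> B \<Longrightarrow> x$v = 0"
  shows "x$u \<le> 0"
proof -
  have fin: "finite (range (\<lambda>v. x$v))" by simp
  have "Max (range (\<lambda>v. x$v)) \<in> range (\<lambda>v. x$v)" by (rule Max_in[OF fin]) simp
  then obtain k where k: "x$k = Max (range (\<lambda>v. x$v))" by (metis imageE)
  have km: "x$u' \<le> x$k" for u' using k fin by simp
  obtain b where b: "b \<in> B" "(k,b) \<in> E\<^sup>*" using reach_basin by blast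
  have "x$b = x$k" by (rule max_closed[OF x _ b(2)]) (use km in auto)
  then show ?thesis using km[of u] zB[OF b(1)] by simp
qed

lemma zero_ker:
  assumes x: "transpose Om *v x = 0" and zB: "\<And>v. v \<in> B \<Longrightarrow> x$v = 0"
  shows "x = 0"
proof -
  have x': "transpose Om *v (0 - x) = 0" unfolding matrix_vector_mult_diff_distrib x by simp
  have "x$u \<le> 0" for u by (rule le_zero[OF x zB])
  moreover have "(0 - x)$u \<le> 0" for u by (rule le_zero[OF x']) (use zB in simp)
  ultimately show ?thesis by (simp add: vec_eq_iff order_antisym)
qed

lemma rep_in: "C \<in> basins Om \<Longrightarrow> (SOME v. v \<in> C) \<in> C"
  using basin_ne by (meson ex_in_conv someI_ex)

lemma kappa_rep: "C \<in> basins Om \<Longrightarrow> kappa Om C $ (SOME v. v \<in> C) = (\<Sum>F\<in>T. fweight Om F)"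
  using kappa_B rep_in basin_sub by (metis subsetD)

lemma kappa_inj: "inj_on (kappa Om) (basins Om)"
proof (rule inj_onI)
  fix C C' assume C: "C \<in> basins Om" and C': "C' \<in> basins Om" and eq: "kappa Om C = kappa Om C'"
  let ?r = "SOME v. v \<in> C"
  have rB: "?r \<in> B" using rep_in[OF C] basin_sub[OF C] by auto
  have "kappa Om C' $ ?r \<noteq> 0" using kappa_rep[OF C] eq Z_pos by simp
  then have "?r \<in> C'" using kappa_B[OF C' rB] by (auto split: if_splits)
  then show "C = C'" using basin_disj[OF C C' rep_in[OF C]] by simp
qed

lemma kappa_indep: "independent (kappa Om ` basins Om)"
proof
  assume "dependent (kappa Om ` basins Om)"
  then obtain u where u: "\<exists>v\<in>kappa Om ` basins Om. u v \<noteq> 0"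
    and s: "(\<Sum>v\<in>kappa Om ` basins Om. u v *\<^sub>R v) = 0"
    using dependent_finite[of "kappa Om ` basins Om"] by auto
  have s': "(\<Sum>C\<in>basins Om. u (kappa Om C) *\<^sub>R kappa Om C) = 0"
    using s sum.reindex[OF kappa_inj, of "\<lambda>v. u v *\<^sub>R v"] by simp
  obtain C0 where C0: "C0 \<in> basins Om" "u (kappa Om C0) \<noteq> 0" using u by blast
  let ?r = "SOME v. v \<in> C0"
  have rB: "?r \<in> B" using rep_in[OF C0(1)] basin_sub[OF C0(1)] by auto
  have "0 = (\<Sum>C\<in>basins Om. u (kappa Om C) *\<^sub>R kappa Om C) $ ?r" using s' by simp
  also have "\<dots> = (\<Sum>C\<in>basins Om. if C = C0 then u (kappa Om C) * (\<Sum>F\<in>T. fweight Om F) else 0)"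
    unfolding sum_component
  proof (intro sum.cong refl)
    fix C assume C: "C \<in> basins Om"
    have "?r \<in> C \<longleftrightarrow> C = C0" using basin_disj[OF C C0(1) _ rep_in[OF C0(1)]] rep_in[OF C0(1)] by auto
    then show "(u (kappa Om C) *\<^sub>R kappa Om C) $ ?r = (if C = C0 then u (kappa Om C) * (\<Sum>F\<in>T. fweight Om F) else 0)"
      using kappa_B[OF C rB] by simp
  qed
  also have "\<dots> = u (kappa Om C0) * (\<Sum>F\<in>T. fweight Om F)"
    using C0(1) by (simp add: sum.delta')
  finally show False using C0(2) Z_pos by simp
qed

lemma span_sub: "span (kappa Om ` basins Om) \<subseteq> {x. transpose Om *v x = 0}"
proof -
  have "subspace {x. transpose Om *v x = 0}"
    unfolding subspace_def by (simp del: transpose_matrix_vector add: matrix_vector_right_distrib matrix_vector_mult_scaleR)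
  then show ?thesis
    using kernel by (intro span_minimal) auto
qed

lemma span_ker: "span (kappa Om ` basins Om) = {x. transpose Om *v x = 0}"
proof
  show "span (kappa Om ` basins Om) \<subseteq> {x. transpose Om *v x = 0}" by (rule span_sub)
next
  show "{x. transpose Om *v x = 0} \<subseteq> span (kappa Om ` basins Om)"
  proof
    fix x assume "x \<in> {x. transpose Om *v x = 0}"
    then have x: "transpose Om *v x = 0" by simp
    define Z where "Z = (\<Sum>F\<in>T. fweight Om F)"
    have Z: "Z > 0" unfolding Z_def by (rule Z_pos)
    define rep where "rep C = (SOME v. v \<in> C)" for C :: "'n set"
    define z where "z = (\<Sum>C\<in>basins Om. (x $ rep C / Z) *\<^sub>R kappa Om C)"
    have zs: "z \<in> span (kappa Om ` basins Om)"
      unfolding z_def by (intro span_sum span_scale span_base) auto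
    have zk: "transpose Om *v z = 0"
      using zs span_sub by auto
    have "x - z = 0"
    proof (rule zero_ker)
      show "transpose Om *v (x - z) = 0" unfolding matrix_vector_mult_diff_distrib x zk by simp
    next
      fix v assume vB: "v \<in> B"
      then obtain C0 where C0: "C0 \<in> basins Om" "v \<in> C0" unfolding basin_union_def by blast
      have "z $ v = (\<Sum>C\<in>basins Om. if C = C0 then x $ rep C else 0)"
        unfolding z_def sum_component
      proof (intro sum.cong refl)
        fix C assume C: "C \<in> basins Om"
        have "v \<in> C \<longleftrightarrow> C = C0" using basin_disj[OF C C0(1) _ C0(2)] C0(2) by auto
        then show "((x $ rep C / Z) *\<^sub>R kappa Om C) $ v = (if C = C0 then x $ rep C else 0)"
          using kappa_B[OF C vB] Z unfolding Z_def by simp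
      qed
      also have "\<dots> = x $ rep C0" using C0(1) by (simp add: sum.delta')
      also have "\<dots> = x $ v" unfolding rep_def by (rule const_basin[OF x C0(1) rep_in[OF C0(1)] C0(2)])
      finally show "(x - z) $ v = 0" by simp
    qed
    then show "x \<in> span (kappa Om ` basins Om)" using zs by simp
  qed
qed

lemma conserved:
  assumes I: "is_interval I"
    and D: "\<forall>t\<in>I. (\<Lambda> has_vector_derivative (Om *v \<Lambda> t)) (at t within I)"
    and C: "C \<in> basins Om" and s: "s \<in> I" and t: "t \<in> I"
  shows "kappa Om C \<bullet> \<Lambda> s = kappa Om C \<bullet> \<Lambda> t"
proof -
  have "((\<lambda>t. kappa Om C \<bullet> \<Lambda> t) has_field_derivative 0) (at t within I)" if "t \<in> I" for t
  proof -
    have "((\<lambda>t. kappa Om C \<bullet> \<Lambda> t) has_vector_derivative (kappa Om C \<bullet> (Om *v \<Lambda> t))) (at t within I)"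
      using D that by (intro bounded_linear.has_vector_derivative[OF bounded_linear_inner_right]) auto
    moreover have "kappa Om C \<bullet> (Om *v \<Lambda> t) = 0"
      using dot_lmul_matrix[of "kappa Om C" Om "\<Lambda> t"] kernel[OF C]
      by simp
    ultimately show ?thesis by (simp add: has_real_derivative_iff_has_vector_derivative)
  qed
  then obtain c where "\<forall>x\<in>I. kappa Om C \<bullet> \<Lambda> x = c"
    using has_field_derivative_zero_constant[of I] I by (metis is_interval_convex)
  then show ?thesis using s t by simp
qed

end


lemma ctrans_mult: "ctrans (A ** B) = ctrans B ** ctrans (A :: complex^'n^'m)"
  for B :: "complex^'k^'n"
  by (simp add: vec_eq_iff ctrans_def matrix_matrix_mult_def mult.commute)

lemma ctrans_ctrans: "ctrans (ctrans A) = A"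
  by (simp add: vec_eq_iff ctrans_def)

lemma trace_gram: "0 \<le> Re (trace (M ** ctrans M))" for M :: "complex^'n^'n"
proof -
  have "Re (trace (M ** ctrans M)) = (\<Sum>i\<in>UNIV. \<Sum>k\<in>UNIV. (Re (M$i$k))\<^sup>2 + (Im (M$i$k))\<^sup>2)"
    by (simp add: trace_def matrix_matrix_mult_def ctrans_def complex_mult_cnj)
  also have "\<dots> \<ge> 0" by (intro sum_nonneg) simp
  finally show ?thesis .
qed

lemma trace_proj_nonneg:
  fixes P Q L :: "complex^'n^'n"
  assumes P: "P ** P = P" "ctrans P = P" and Q: "Q ** Q = Q" "ctrans Q = Q"
  shows "0 \<le> Re (trace (P ** L ** Q ** ctrans L))"
proof -
  define M where "M = P ** L ** Q"
  have "M ** ctrans M = P ** L ** Q ** ctrans L ** P"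
    unfolding M_def ctrans_mult P(2) Q(2)
    by (metis Q(1) matrix_mul_assoc)
  then have "trace (M ** ctrans M) = trace (P ** (P ** L ** Q ** ctrans L))"
    using trace_mul_sym[of "P ** L ** Q ** ctrans L" P] by simp
  also have "\<dots> = trace (P ** L ** Q ** ctrans L)"
    by (metis P(1) matrix_mul_assoc)
  finally show ?thesis using trace_gram[of M] by simp
qed

lemma rate_nonneg:
  assumes "\<And>j. rank_one_orth_proj (\<pi> j)"
  shows "0 \<le> rate N L \<pi> j k"
proof -
  have "0 \<le> Re (trace (\<pi> j ** L a ** \<pi> k ** ctrans (L a)))" for a
    using assms[of j] assms[of k] unfolding rank_one_orth_proj_def
    by (intro trace_proj_nonneg) auto
  then show ?thesis unfolding rate_def by (simp add: sum_nonneg)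
qed

lemma Omega_mk:
  fixes \<pi> :: "'n \<Rightarrow> complex^'n^'n"
  assumes "\<And>j. rank_one_orth_proj (\<pi> j)"
  shows "mk (Omega_mat N L \<pi>)"
proof
  fix j k :: 'n assume "j \<noteq> k"
  then show "0 \<le> Omega_mat N L \<pi> $ j $ k" unfolding Omega_mat_def using rate_nonneg[OF assms] by simp
next
  fix k :: 'n
  have "(\<Sum>j\<in>UNIV. Omega_mat N L \<pi> $ j $ k)
      = Omega_mat N L \<pi> $ k $ k + (\<Sum>j\<in>UNIV - {k}. Omega_mat N L \<pi> $ j $ k)"
    by (simp add: sum.remove[of UNIV k])
  also have "\<dots> = 0" unfolding Omega_mat_def by simp
  finally show "(\<Sum>j\<in>UNIV. Omega_mat N L \<pi> $ j $ k) = 0" .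
qed

theorem mainTheorem4:
  fixes N :: nat
    and L :: "nat \<Rightarrow> complex^'n^'n"
    and \<pi> :: "'n \<Rightarrow> complex^'n^'n"
    and \<Omega> :: "real^'n^'n"
  assumes proj: "\<And>j. rank_one_orth_proj (\<pi> j)"
    and orth: "\<And>j k. j \<noteq> k \<Longrightarrow> \<pi> j ** \<pi> k = 0"
    and Om: "\<Omega> = Omega_mat N L \<pi>"
  shows "span (kappa \<Omega> ` basins \<Omega>) = {x. transpose \<Omega> *v x = 0}
       \<and> inj_on (kappa \<Omega>) (basins \<Omega>)
       \<and> independent (kappa \<Omega> ` basins \<Omega>)
       \<and> (\<forall>(\<Lambda> :: real \<Rightarrow> real^'n) I. is_interval I \<longrightarrow>
            (\<forall>t\<in>I. (\<Lambda> has_vector_derivative (\<Omega> *v \<Lambda> t)) (at t within I)) \<longrightarrow>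
            (\<forall>C\<in>basins \<Omega>. \<forall>s\<in>I. \<forall>t\<in>I. kappa \<Omega> C \<bullet> \<Lambda> s = kappa \<Omega> C \<bullet> \<Lambda> t))"
proof -
  interpret mk \<Omega> unfolding Om by (rule Omega_mk[OF proj])
  show ?thesis using span_ker kappa_inj kappa_indep conserved by blast
qed

end
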